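(* For $0<a<b$ and $y>0$ let $R_{a,b}(y)$ be the number of pairs of nonnegative integers $(\ell,p)$ with $a\ell+bp\le y$. Then $$\frac{y^2}{2ab}+\frac{y}{2a}\le R_{a,b}(y)\le \frac{y^2}{2ab}+\frac{y}{2a}+\frac{y}{b}+\frac{b}{8a}+1.$$ *)

theory Defs
  imports Complex_Main
begin

definition lattice_count :: "real \<Rightarrow> real \<Rightarrow> real \<Rightarrow> nat" where
  "lattice_count a b y = card {(l::nat, p::nat). a * real l + b * real p \<le> y}"

end

theory Submission
  imports Defs
begin

lemma sum_real_atMost: "(\<Sum>p\<le>(P::nat). real p) = real P * (real P + 1) / 2"
  by (induction P) (auto simp: field_simps)

theorem proposition2p5:
  fixes a b y :: real
  assumes "0 < a" and "a < b" and "0 < y"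
  shows "y^2 / (2*a*b) + y / (2*a) \<le> real (lattice_count a b y)
    \<and> real (lattice_count a b y) \<le> y^2 / (2*a*b) + y / (2*a) + y / b + b / (8*a) + 1"
proof -
  have a0: "0 < a" and b0: "0 < b" using assms by auto
  define P where "P = nat (floor (y / b))"
  define N where "N = (\<lambda>p::nat. nat (floor ((y - b * real p) / a)))"
  have mem: "a * real l + b * real p \<le> y \<longleftrightarrow> p \<le> P \<and> l \<le> N p" for l p
  proof
    assume h: "a * real l + b * real p \<le> y"
    have "b * real p \<le> y" using h a0 by (smt (verit) mult_nonneg_nonneg of_nat_0_le_iff)
    hence "real p \<le> y / b" using b0 by (simp add: field_simps)
    hence "int p \<le> floor (y / b)" by (simp add: le_floor_iff)
    hence 1: "p \<le> P" unfolding P_def by simp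
    have "a * real l \<le> y - b * real p" using h by simp
    hence "real l \<le> (y - b * real p) / a" using a0 by (simp add: field_simps)
    hence "int l \<le> floor ((y - b * real p) / a)" by (simp add: le_floor_iff)
    hence "l \<le> N p" unfolding N_def by simp
    with 1 show "p \<le> P \<and> l \<le> N p" by simp
  next
    assume h: "p \<le> P \<and> l \<le> N p"
    have "0 \<le> floor (y / b)" using assms by simp
    hence "int p \<le> floor (y / b)" using h unfolding P_def by (simp add: le_nat_iff)
    hence "real p \<le> y / b" by (simp add: le_floor_iff)
    hence "b * real p \<le> y" using b0 by (simp add: field_simps)
    hence "0 \<le> (y - b * real p) / a" using a0 by simp
    hence "0 \<le> floor ((y - b * real p) / a)" by simp
    hence "int l \<le> floor ((y - b * real p) / a)" using h unfolding N_def by (simp add: le_nat_iff)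
    hence "real l \<le> (y - b * real p) / a" by (simp add: le_floor_iff)
    thus "a * real l + b * real p \<le> y" using a0 by (simp add: field_simps)
  qed
  have S: "{(l::nat, p::nat). a * real l + b * real p \<le> y} = (\<lambda>(p,l). (l,p)) ` (SIGMA p:{..P}. {..N p})"
    using mem by (auto simp: image_iff)
  have "lattice_count a b y = card (SIGMA p:{..P}. {..N p})"
    unfolding lattice_count_def S by (rule card_image) (auto simp: inj_on_def)
  also have "\<dots> = (\<Sum>p\<le>P. N p + 1)" by (simp add: card_SigmaI)
  finally have R: "real (lattice_count a b y) = (\<Sum>p\<le>P. real (N p) + 1)" by (simp add: add.commute)
  have Nb: "(y - b * real p) / a - 1 \<le> real (N p) \<and> real (N p) \<le> (y - b * real p) / a" if "p \<le> P" for p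
  proof -
    have "0 \<le> (y - b * real p) / a" using mem[of 0 p] that a0 by simp
    thus ?thesis unfolding N_def by (simp; linarith)
  qed
  define F where "F = (\<Sum>p\<le>P. (y - b * real p) / a)"
  have F: "F = ((real P + 1) * y - b * (real P * (real P + 1) / 2)) / a"
    unfolding F_def by (simp add: sum_divide_distrib[symmetric] sum_subtractf sum_distrib_left[symmetric] sum_real_atMost)
  have lo: "F \<le> real (lattice_count a b y)" unfolding R F_def
    by (rule sum_mono) (use Nb in force)
  have hi: "real (lattice_count a b y) \<le> F + real P + 1" unfolding R F_def
  proof -
    have "(\<Sum>p\<le>P. real (N p) + 1) \<le> (\<Sum>p\<le>P. (y - b * real p) / a + 1)"
      by (rule sum_mono) (use Nb in force)
    also have "\<dots> = (\<Sum>p\<le>P. (y - b * real p) / a) + real P + 1" by (simp add: sum.distrib)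
    finally show "(\<Sum>p\<le>P. real (N p) + 1) \<le> (\<Sum>p\<le>P. (y - b * real p) / a) + real P + 1" .
  qed
  have fl: "real_of_int (floor (y/b)) = real P" unfolding P_def using assms by simp
  have Pu: "real P \<le> y / b" and Pl: "y / b - 1 < real P" using fl
    by (metis of_int_floor_le, metis real_of_int_floor_add_one_gt diff_less_eq)
  define u where "u = b * real P"
  have u1: "u \<le> y" using Pu b0 unfolding u_def by (simp add: field_simps)
  have u2: "y - b < u" using Pl b0 unfolding u_def by (simp add: field_simps)
  have e1: "2*a*b * (y^2 / (2*a*b) + y / (2*a)) = y^2 + b*y" using a0 b0 by (simp add: field_simps power2_eq_square)
  have e2: "2*a*b * F = 2*(u+b)*y - u*(u+b)" unfolding F u_def using a0 b0 by (simp add: field_simps)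
  have e3: "2*a*b * (y^2 / (2*a*b) + y / (2*a) + y / b + b / (8*a) + 1) = y^2 + b*y + 2*a*y + b^2/4 + 2*a*b"
    using a0 b0 by (simp add: field_simps power2_eq_square)
  have "2*a*b*(y^2 / (2*a*b) + y / (2*a)) \<le> 2*a*b*F"
  proof -
    have "0 \<le> (y-u)*(u-y+b)" using u1 u2 by simp
    thus ?thesis unfolding e1 e2 by (simp add: algebra_simps power2_eq_square)
  qed
  hence L: "y^2 / (2*a*b) + y / (2*a) \<le> F" using a0 b0 by simp
  have "2*a*b*(F + real P + 1) \<le> 2*a*b*(y^2 / (2*a*b) + y / (2*a) + y / b + b / (8*a) + 1)"
  proof -
    have "0 \<le> (u-y+b/2)^2 + 2*a*(y-u)" using u1 a0 by simp
    moreover have "2*a*b*(F + real P + 1) = 2*(u+b)*y - u*(u+b) + 2*a*u + 2*a*b"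
      using e2 unfolding u_def by (simp add: algebra_simps)
    ultimately show ?thesis unfolding e3 by (simp add: algebra_simps power2_eq_square)
  qed
  hence U: "F + real P + 1 \<le> y^2 / (2*a*b) + y / (2*a) + y / b + b / (8*a) + 1" using a0 b0 by simp
  show ?thesis using L U lo hi by linarith
qed

end
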